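(* Let $G$ be a group, $U$ a nonlocal vertex algebra on which $G$ acts by automorphisms, and $V=\coprod_{g\in G}V[g]$ a nonlocal vertex $G$-graded algebra, and let $U\sharp_GV$ be their smash product. Suppose that $K$ is a nonlocal vertex algebra and $\psi:U\to K$, $\phi:V\to K$ are homomorphisms of nonlocal vertex algebras such that $Y(\phi(v),x_1)Y(\psi(u),x_2)=Y(\psi(gu),x_2)Y(\phi(v),x_1)$ for $u\in U$, $v\in V[g]$, $g\in G$. Then there exists a unique nonlocal vertex algebra homomorphism $f:U\sharp_GV\to K$ extending both $\psi$ and $\phi$, i.e. $f(u\otimes\mathbf{1})=\psi(u)$ and $f(\mathbf{1}\otimes v)=\phi(v)$.
   Context: A nonlocal vertex algebra is a complex vector space $V$ with vector $\mathbf{1}$ and linear $Y:V\to\mathrm{Hom}(V,V((x)))$, $Y(v,x)=\sum_nv_nx^{-n-1}$, with $Y(\mathbf{1},x)v=v$, $Y(v,x)\mathbf{1}\in V[[x]]$ with constant term $v$, and weak associativity $(x_0+x_2)^lY(u,x_0+x_2)Y(v,x_2)w=(x_0+x_2)^lY(Y(u,x_0)v,x_2)w$ for some $l\ge0$; homomorphisms preserve $\mathbf{1}$ and $Y$. A nonlocal vertex $G$-graded algebra ($e$ the identity of $G$) is a nonlocal vertex algebra $V=\coprod_gV[g]$ with $\mathbf{1}\in V[e]$ and $Y(u,x)v\in V[gh]((x))$ for $u\in V[g]$, $v\in V[h]$. The smash product $U\sharp_GV$ is $U\otimes V$ with vacuum $\mathbf{1}\otimes\mathbf{1}$ and vertex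 operators $Y_\sharp(u\otimes v,x)(u'\otimes v')=Y(u,x)g(u')\otimes Y(v,x)v'$ for $u,u'\in U$, $v\in V[g]$, $v'\in V$; it is a nonlocal vertex algebra containing $U\cong U\otimes\mathbf{1}$ and $V\cong\mathbf{1}\otimes V$ as subalgebras. *)

theory Defs
  imports Complex_Main "HOL-Library.Function_Algebras" "HOL-Algebra.Group"
begin

text \<open>A vertex operator Y is encoded by its modes: Y u n v is the coefficient u_n v
  of x^(-n-1) in Y(u,x)v.\<close>

definition nva :: "(complex \<Rightarrow> 'v \<Rightarrow> 'v) \<Rightarrow> 'v::ab_group_add \<Rightarrow> ('v \<Rightarrow> int \<Rightarrow> 'v \<Rightarrow> 'v) \<Rightarrow> bool" where
  "nva sc vac Y \<longleftrightarrow>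
     vector_space sc
   \<and> (\<forall>n v. Vector_Spaces.linear sc sc (\<lambda>u. Y u n v))
   \<and> (\<forall>u n. Vector_Spaces.linear sc sc (Y u n))
   \<comment> \<open>truncation: Y(u,x)v lies in V((x))\<close>
   \<and> (\<forall>u v. \<exists>N. \<forall>n\<ge>N. Y u n v = 0)
   \<comment> \<open>vacuum: Y(1,x)v = v\<close>
   \<and> (\<forall>n v. Y vac n v = (if n = -1 then v else 0))
   \<comment> \<open>creation: Y(v,x)1 in V[[x]] with constant term v\<close>
   \<and> (\<forall>v n. n \<ge> 0 \<longrightarrow> Y v n vac = 0)
   \<and> (\<forall>v. Y v (-1) vac = v)
   \<comment> \<open>weak associativity, coefficient of x0^(-p-1) x2^(-q-1)\<close>
   \<and> (\<forall>u v w. \<exists>l::nat. \<forall>p q::int.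
        (\<Sum>i\<in>{i::nat. Y v (q + int i) w \<noteq> 0}.
            sc ((of_int (int i - p - 1)) gchoose i) (Y u (int l + p - int i) (Y v (q + int i) w)))
      = (\<Sum>j\<le>l. sc (of_nat (l choose j)) (Y (Y u (int l + p - int j) v) (q + int j) w)))"

definition nva_hom ::
  "(complex \<Rightarrow> 'a \<Rightarrow> 'a) \<Rightarrow> 'a::ab_group_add \<Rightarrow> ('a \<Rightarrow> int \<Rightarrow> 'a \<Rightarrow> 'a) \<Rightarrow> 'a set \<Rightarrow>
   (complex \<Rightarrow> 'b \<Rightarrow> 'b) \<Rightarrow> 'b::ab_group_add \<Rightarrow> ('b \<Rightarrow> int \<Rightarrow> 'b \<Rightarrow> 'b) \<Rightarrow> ('a \<Rightarrow> 'b) \<Rightarrow> bool" where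
  "nva_hom scA vacA YA A scB vacB YB f \<longleftrightarrow>
     (\<forall>a\<in>A. \<forall>b\<in>A. f (a + b) = f a + f b)
   \<and> (\<forall>c. \<forall>a\<in>A. f (scA c a) = scB c (f a))
   \<and> f vacA = vacB
   \<and> (\<forall>a\<in>A. \<forall>b\<in>A. \<forall>n. f (YA a n b) = YB (f a) n (f b))"

definition nva_group_action ::
  "('g, 'm) monoid_scheme \<Rightarrow> (complex \<Rightarrow> 'u \<Rightarrow> 'u) \<Rightarrow> 'u::ab_group_add \<Rightarrow> ('u \<Rightarrow> int \<Rightarrow> 'u \<Rightarrow> 'u)
   \<Rightarrow> ('g \<Rightarrow> 'u \<Rightarrow> 'u) \<Rightarrow> bool" where
  "nva_group_action G sc vac Y \<sigma> \<longleftrightarrow>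
     (\<forall>g\<in>carrier G. nva_hom sc vac Y UNIV sc vac Y (\<sigma> g) \<and> bij (\<sigma> g))
   \<and> \<sigma> \<one>\<^bsub>G\<^esub> = id
   \<and> (\<forall>g\<in>carrier G. \<forall>h\<in>carrier G. \<sigma> (g \<otimes>\<^bsub>G\<^esub> h) = \<sigma> g \<circ> \<sigma> h)"

definition nva_graded ::
  "('g, 'm) monoid_scheme \<Rightarrow> (complex \<Rightarrow> 'v \<Rightarrow> 'v) \<Rightarrow> 'v::ab_group_add \<Rightarrow> ('v \<Rightarrow> int \<Rightarrow> 'v \<Rightarrow> 'v)
   \<Rightarrow> ('g \<Rightarrow> 'v set) \<Rightarrow> bool" where
  "nva_graded G sc vac Y Vg \<longleftrightarrow>
     nva sc vac Y
   \<and> (\<forall>g\<in>carrier G. module.subspace sc (Vg g))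
   \<comment> \<open>V is the direct sum of the V[g]\<close>
   \<and> (\<forall>v. \<exists>!vs :: 'g \<Rightarrow> 'v.
          finite {g. vs g \<noteq> 0}
        \<and> (\<forall>g. (g \<in> carrier G \<longrightarrow> vs g \<in> Vg g) \<and> (g \<notin> carrier G \<longrightarrow> vs g = 0))
        \<and> v = (\<Sum>g\<in>{g. vs g \<noteq> 0}. vs g))
   \<and> vac \<in> Vg \<one>\<^bsub>G\<^esub>
   \<and> (\<forall>g\<in>carrier G. \<forall>h\<in>carrier G. \<forall>u\<in>Vg g. \<forall>v\<in>Vg h. \<forall>n. Y u n v \<in> Vg (g \<otimes>\<^bsub>G\<^esub> h))"

text \<open>Concrete model of the algebraic tensor product U \<otimes> V: u \<otimes> v is the bilinear
  form (phi, psi) \<mapsto> phi(u) psi(v) on pairs of linear functionals, and U \<otimes> V is the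
  complex span of these inside the function space.\<close>

type_synonym ('u, 'v) tens = "('u \<Rightarrow> complex) \<Rightarrow> ('v \<Rightarrow> complex) \<Rightarrow> complex"

definition tens ::
  "(complex \<Rightarrow> 'u \<Rightarrow> 'u) \<Rightarrow> (complex \<Rightarrow> 'v \<Rightarrow> 'v) \<Rightarrow> 'u::ab_group_add \<Rightarrow> 'v::ab_group_add \<Rightarrow> ('u, 'v) tens" where
  "tens scU scV u v = (\<lambda>\<phi> \<psi>. if Vector_Spaces.linear scU (*) \<phi> \<and> Vector_Spaces.linear scV (*) \<psi>
                               then \<phi> u * \<psi> v else 0)"

definition tscale :: "complex \<Rightarrow> ('u, 'v) tens \<Rightarrow> ('u, 'v) tens" where
  "tscale c F = (\<lambda>\<phi> \<psi>. c * F \<phi> \<psi>)"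

definition tensor_space ::
  "(complex \<Rightarrow> 'u \<Rightarrow> 'u) \<Rightarrow> (complex \<Rightarrow> 'v \<Rightarrow> 'v) \<Rightarrow> ('u::ab_group_add, 'v::ab_group_add) tens set" where
  "tensor_space scU scV = module.span tscale (range (\<lambda>(u, v). tens scU scV u v))"

text \<open>Ys is the vertex operator of the smash product U \<sharp>_G V on U \<otimes> V: bilinear on
  U \<otimes> V and given on pure tensors (v homogeneous of degree g) by
  Y(u \<otimes> v,x)(u' \<otimes> v') = Y(u,x) g(u') \<otimes> Y(v,x) v'.\<close>

definition smash_Y ::
  "('g, 'm) monoid_scheme \<Rightarrow> (complex \<Rightarrow> 'u \<Rightarrow> 'u) \<Rightarrow> ('u::ab_group_add \<Rightarrow> int \<Rightarrow> 'u \<Rightarrow> 'u) \<Rightarrow> ('g \<Rightarrow> 'u \<Rightarrow> 'u)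
   \<Rightarrow> (complex \<Rightarrow> 'v \<Rightarrow> 'v) \<Rightarrow> ('v::ab_group_add \<Rightarrow> int \<Rightarrow> 'v \<Rightarrow> 'v) \<Rightarrow> ('g \<Rightarrow> 'v set)
   \<Rightarrow> (('u, 'v) tens \<Rightarrow> int \<Rightarrow> ('u, 'v) tens \<Rightarrow> ('u, 'v) tens) \<Rightarrow> bool" where
  "smash_Y G scU YU \<sigma> scV YV Vg Ys \<longleftrightarrow>
     (let T = tensor_space scU scV; t = tens scU scV in
       (\<forall>a\<in>T. \<forall>b\<in>T. \<forall>c\<in>T. \<forall>n. Ys (a + b) n c = Ys a n c + Ys b n c
                            \<and> Ys c n (a + b) = Ys c n a + Ys c n b)
     \<and> (\<forall>z. \<forall>a\<in>T. \<forall>b\<in>T. \<forall>n. Ys (tscale z a) n b = tscale z (Ys a n b)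
                            \<and> Ys b n (tscale z a) = tscale z (Ys b n a))
     \<and> (\<forall>g\<in>carrier G. \<forall>u u' v'. \<forall>v\<in>Vg g. \<forall>n.
          Ys (t u v) n (t u' v')
          = (\<Sum>i\<in>{i. YU u i (\<sigma> g u') \<noteq> 0 \<and> YV v (n - 1 - i) v' \<noteq> 0}.
                t (YU u i (\<sigma> g u')) (YV v (n - 1 - i) v'))))"

end

theory Submission
  imports Defs
begin


locale cvs = vector_space sc for sc :: "complex \<Rightarrow> 'v::ab_group_add \<Rightarrow> 'v"
begin

definition LS :: "(int \<Rightarrow> int \<Rightarrow> 'v) \<Rightarrow> nat \<Rightarrow> int \<Rightarrow> int \<Rightarrow> nat \<Rightarrow> 'v" where
  "LS A l p q R = (\<Sum>i\<le>R. sc ((of_int (int i - p - 1)) gchoose i) (A (int l + p - int i) (q + int i)))"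

definition RS :: "(int \<Rightarrow> int \<Rightarrow> 'v) \<Rightarrow> nat \<Rightarrow> int \<Rightarrow> int \<Rightarrow> 'v" where
  "RS B l p q = (\<Sum>j\<le>l. sc (of_nat (l choose j)) (B (int l + p - int j) (q + int j)))"

lemma LS_pascal: "LS A (Suc l) p q (Suc R) = LS A l (p+1) q (Suc R) + LS A l p (q+1) R"
proof -
  have e1: "LS A (Suc l) p q (Suc R) = A (int l + p + 1) q + (\<Sum>i\<le>R. sc ((of_int (int i - p)) gchoose Suc i) (A (int l + p - int i) (q + int i + 1)))"
    unfolding LS_def by (subst sum.atMost_Suc_shift) (simp add: algebra_simps)
  have e2: "LS A l (p+1) q (Suc R) = A (int l + p + 1) q + (\<Sum>i\<le>R. sc ((of_int (int i - p - 1)) gchoose Suc i) (A (int l + p - int i) (q + int i + 1)))"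
    unfolding LS_def by (subst sum.atMost_Suc_shift) (simp add: algebra_simps)
  have e3: "LS A l p (q+1) R = (\<Sum>i\<le>R. sc ((of_int (int i - p - 1)) gchoose i) (A (int l + p - int i) (q + int i + 1)))"
    unfolding LS_def by (simp add: algebra_simps)
  have pas: "(of_int (int i - p) :: complex) gchoose Suc i = (of_int (int i - p - 1) gchoose i) + (of_int (int i - p - 1) gchoose Suc i)" for i
    using gbinomial_Suc_Suc[of "of_int (int i - p - 1) :: complex" i] by simp
  have "(\<Sum>i\<le>R. sc ((of_int (int i - p)) gchoose Suc i) (A (int l + p - int i) (q + int i + 1)))
     = (\<Sum>i\<le>R. sc ((of_int (int i - p - 1)) gchoose Suc i) (A (int l + p - int i) (q + int i + 1))
        + sc ((of_int (int i - p - 1)) gchoose i) (A (int l + p - int i) (q + int i + 1)))"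
    by (rule sum.cong) (simp_all only: pas scale_left_distrib add.commute)
  then show ?thesis unfolding e1 e2 e3
    by (simp add: sum.distrib add.assoc)
qed

lemma RS_pascal: "RS B (Suc l) p q = RS B l (p+1) q + RS B l p (q+1)"
proof -
  have f1: "RS B (Suc l) p q = B (int l + p + 1) q + (\<Sum>j\<le>l. sc (of_nat (Suc l choose Suc j)) (B (int l + p - int j) (q + int j + 1)))"
    unfolding RS_def by (subst sum.atMost_Suc_shift) (simp add: algebra_simps)
  have "RS B l (p+1) q = (\<Sum>j\<le>Suc l. sc (of_nat (l choose j)) (B (int l + (p+1) - int j) (q + int j)))"
    unfolding RS_def by simp
  also have "\<dots> = B (int l + p + 1) q + (\<Sum>j\<le>l. sc (of_nat (l choose Suc j)) (B (int l + p - int j) (q + int j + 1)))"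
    by (subst sum.atMost_Suc_shift) (simp add: algebra_simps)
  finally have f2: "RS B l (p+1) q = B (int l + p + 1) q + (\<Sum>j\<le>l. sc (of_nat (l choose Suc j)) (B (int l + p - int j) (q + int j + 1)))" .
  have f3: "RS B l p (q+1) = (\<Sum>j\<le>l. sc (of_nat (l choose j)) (B (int l + p - int j) (q + int j + 1)))"
    unfolding RS_def by (simp add: algebra_simps)
  show ?thesis unfolding f1 f2 f3
    by (simp add: scale_left_distrib sum.distrib algebra_simps)
qed

lemma LS_stable:
  assumes A0: "\<And>m k. k \<ge> M0 \<Longrightarrow> A m k = 0" and R: "nat (M0 - q) \<le> R" "R \<le> R'"
  shows "LS A l p q R' = LS A l p q R"
  unfolding LS_def
proof (rule sum.mono_neutral_right)
  show "\<forall>i\<in>{..R'} - {..R}. sc ((of_int (int i - p - 1)) gchoose i) (A (int l + p - int i) (q + int i)) = 0"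
  proof
    fix i assume "i \<in> {..R'} - {..R}"
    then have "q + int i \<ge> M0" using R by auto
    then show "sc ((of_int (int i - p - 1)) gchoose i) (A (int l + p - int i) (q + int i)) = 0"
      using A0 by simp
  qed
qed (use R in auto)

end

lemma cvsI: "vector_space sc \<Longrightarrow> cvs sc" by (simp add: cvs_def)

lemma lin_add: "Vector_Spaces.linear s1 s2 f \<Longrightarrow> f (x + y) = f x + f y"
  by (simp add: Vector_Spaces.linear_iff)
lemma lin_scale: "Vector_Spaces.linear s1 s2 f \<Longrightarrow> f (s1 c x) = s2 c (f x)"
  by (simp add: Vector_Spaces.linear_iff)
lemma lin_zero: "Vector_Spaces.linear s1 s2 f \<Longrightarrow> f 0 = 0"
  by (metis add_cancel_right_right add_0 lin_add)
lemma lin_sum: "Vector_Spaces.linear s1 s2 f \<Longrightarrow> f (sum g S) = (\<Sum>x\<in>S. f (g x))"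
  by (induction S rule: infinite_finite_induct) (auto simp: lin_zero lin_add)

lemma nva_basics:
  assumes "nva sc vac Y"
  shows "vector_space sc" "Vector_Spaces.linear sc sc (\<lambda>u. Y u n v)" "Vector_Spaces.linear sc sc (Y u n)"
    "Y 0 n v = 0" "Y u n 0 = 0"
    "Y (u+u') n v = Y u n v + Y u' n v" "Y u n (v+v') = Y u n v + Y u n v'"
    "Y (sc c u) n v = sc c (Y u n v)" "Y u n (sc c v) = sc c (Y u n v)"
    "Y vac n v = (if n = -1 then v else 0)" "Y v (-1) vac = v"
    "\<exists>N. \<forall>n\<ge>N. Y u n v = 0"
    "n \<ge> 0 \<Longrightarrow> Y v n vac = 0"
  using assms unfolding nva_def
  by (auto simp: lin_zero[of sc sc "\<lambda>u. Y u n v"] lin_zero[of sc sc "Y u n"]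
     lin_add[of sc sc "\<lambda>u. Y u n v"] lin_add[of sc sc "Y u n"]
     lin_scale[of sc sc "\<lambda>u. Y u n v"] lin_scale[of sc sc "Y u n"])

lemma iterate_m1:
  fixes sc :: "complex \<Rightarrow> 'v::ab_group_add \<Rightarrow> 'v"
  assumes nv: "nva sc vac Y" and trunc: "\<And>m k. m \<ge> N \<Longrightarrow> Y a m (Y b k w) = 0"
  shows "finite {i. Y a i (Y b (n-1-i) w) \<noteq> 0} \<and>
    Y (Y a (-1) b) n w = (\<Sum>i\<in>{i. Y a i (Y b (n-1-i) w) \<noteq> 0}. Y a i (Y b (n-1-i) w))"
proof -
  interpret cvs sc using nva_basics(1)[OF nv] by (rule cvsI)
  note nb = nva_basics[OF nv]
  obtain M0 where M0: "\<And>k. k \<ge> M0 \<Longrightarrow> Y b k w = 0" using nb(12) by blast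
  obtain M1 where M1: "\<And>m. m \<ge> M1 \<Longrightarrow> Y a m b = 0" using nb(12) by blast
  from nv obtain l where WA: "\<And>p q. (\<Sum>i\<in>{i::nat. Y b (q + int i) w \<noteq> 0}.
            sc ((of_int (int i - p - 1)) gchoose i) (Y a (int l + p - int i) (Y b (q + int i) w)))
      = (\<Sum>j\<le>l. sc (of_nat (l choose j)) (Y (Y a (int l + p - int j) b) (q + int j) w))"
    unfolding nva_def by blast
  define A where "A m k = Y a m (Y b k w)" for m k
  define B where "B m k = Y (Y a m b) k w" for m k
  have A0: "\<And>m k. k \<ge> M0 \<Longrightarrow> A m k = 0" by (simp add: A_def M0 nb)
  have B0: "\<And>m k. m \<ge> M1 \<Longrightarrow> B m k = 0" by (simp add: B_def M1 nb)
  have E: "LS A l p q R = RS B l p q" if R: "nat (M0 - q) \<le> R" for p q R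
  proof -
    have "LS A l p q R = (\<Sum>i\<in>{i::nat. Y b (q + int i) w \<noteq> 0}.
            sc ((of_int (int i - p - 1)) gchoose i) (Y a (int l + p - int i) (Y b (q + int i) w)))"
      unfolding LS_def A_def
    proof (rule sum.mono_neutral_left[symmetric])
      show "{i::nat. Y b (q + int i) w \<noteq> 0} \<subseteq> {..R}"
      proof
        fix i assume "i \<in> {i::nat. Y b (q + int i) w \<noteq> 0}"
        then have "q + int i < M0" using M0 by (meson not_le mem_Collect_eq)
        then show "i \<in> {..R}" using R by auto
      qed
    qed (auto simp: nb)
    also have "\<dots> = RS B l p q" unfolding WA RS_def B_def ..
    finally show ?thesis .
  qed
  have EL: "\<forall>p q R. nat (M0 - q) \<le> R \<longrightarrow> LS A (l + k) p q R = RS B (l + k) p q" for k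
  proof (induction k)
    case 0 then show ?case using E by simp
  next
    case (Suc k)
    show ?case
    proof (intro allI impI)
      fix p q R assume R: "nat (M0 - q) \<le> R"
      have "LS A (l + Suc k) p q R = LS A (Suc (l + k)) p q (Suc R)"
        using LS_stable[where R'="Suc R" and l="Suc (l+k)" and p=p, OF A0 R] by simp
      also have "\<dots> = LS A (l + k) (p+1) q (Suc R) + LS A (l + k) p (q+1) R"
        by (rule LS_pascal)
      also have "\<dots> = RS B (l + k) (p+1) q + RS B (l + k) p (q+1)"
        using Suc.IH R by auto
      also have "\<dots> = RS B (l + Suc k) p q" using RS_pascal by simp
      finally show "LS A (l + Suc k) p q R = RS B (l + Suc k) p q" .
    qed
  qed
  define L where "L = l + nat N"
  have ELL: "LS A L p q R = RS B L p q" if "nat (M0 - q) \<le> R" for p q R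
    using EL that unfolding L_def by blast
  have AN: "A m k = 0" if "m \<ge> int L" for m k
  proof -
    have "m \<ge> N" using that unfolding L_def by linarith
    then show ?thesis using trunc unfolding A_def by blast
  qed
  have RS_top: "RS B L m q = B m (q + int L)" if hi: "\<And>m' k. m' > m \<Longrightarrow> B m' k = 0" for m q
  proof -
    have "RS B L m q = sc (of_nat (L choose L)) (B (int L + m - int L) (q + int L))
        + (\<Sum>j\<in>{..L} - {L}. sc (of_nat (L choose j)) (B (int L + m - int j) (q + int j)))"
      unfolding RS_def by (rule sum.remove) auto
    also have "(\<Sum>j\<in>{..L} - {L}. sc (of_nat (L choose j)) (B (int L + m - int j) (q + int j))) = 0"
      by (rule sum.neutral) (auto simp: hi)
    finally show ?thesis by simp
  qed
  have step1: "\<forall>m. m \<ge> 0 \<longrightarrow> m \<ge> M1 - int d \<longrightarrow> (\<forall>k. B m k = 0)" for d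
  proof (induction d)
    case 0 then show ?case using B0 by simp
  next
    case (Suc d)
    show ?case
    proof (intro allI impI)
      fix m k assume m0: "m \<ge> 0" and md: "m \<ge> M1 - int (Suc d)"
      have hi: "B m' k' = 0" if "m' > m" for m' k'
        using Suc.IH that m0 md by auto
      define q where "q = k - int L"
      have "LS A L m q (nat (M0 - q)) = RS B L m q" by (rule ELL) simp
      also have "\<dots> = B m k" using RS_top[OF hi] unfolding q_def by simp
      finally have eq: "B m k = LS A L m q (nat (M0 - q))" ..
      have "LS A L m q (nat (M0 - q)) = 0"
        unfolding LS_def
      proof (rule sum.neutral, rule ballI)
        fix i assume "i \<in> {..nat (M0 - q)}"
        show "sc ((of_int (int i - m - 1)) gchoose i) (A (int L + m - int i) (q + int i)) = 0"
        proof (cases "int i \<le> m")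
          case True then show ?thesis using AN[of "int L + m - int i"] by simp
        next
          case False
          then have "(of_int (int i - m - 1) :: complex) = of_nat (nat (int i - m - 1))" using m0 by simp
          moreover have "nat (int i - m - 1) < i" using False m0 by auto
          ultimately have "(of_int (int i - m - 1) :: complex) gchoose i = 0"
            by (simp add: binomial_gbinomial[symmetric] binomial_eq_0)
          then show ?thesis by simp
        qed
      qed
      with eq show "B m k = 0" by simp
    qed
  qed
  have B_nonneg: "B m k = 0" if "m \<ge> 0" for m k
    using step1[of "nat (M1 - m)"] that by auto
  define q where "q = n - int L"
  define R where "R = nat (M0 - q)"
  have "LS A L (-1) q R = RS B L (-1) q" by (rule ELL) (simp add: R_def)
  also have "\<dots> = B (-1) n" using RS_top[of "-1" q] B_nonneg unfolding q_def by simp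
  finally have s1: "B (-1) n = LS A L (-1) q R" ..
  define h where "h i = int L - 1 - int i" for i :: nat
  have "LS A L (-1) q R = (\<Sum>i\<le>R. A (h i) (n - 1 - h i))"
    unfolding LS_def
  proof (rule sum.cong)
    fix i assume "i \<in> {..R}"
    have "(of_int (int i - (-1) - 1) :: complex) gchoose i = 1"
      using binomial_gbinomial[of i i, where 'a=complex] by simp
    then show "sc ((of_int (int i - (-1) - 1)) gchoose i) (A (int L + (-1) - int i) (q + int i)) = A (h i) (n - 1 - h i)"
      by (simp add: h_def q_def algebra_simps)
  qed simp
  also have "\<dots> = (\<Sum>j\<in>h ` {..R}. A j (n - 1 - j))"
    by (rule sum.reindex[symmetric, unfolded comp_def]) (auto simp: inj_on_def h_def)
  also have "\<dots> = (\<Sum>j\<in>{j. A j (n - 1 - j) \<noteq> 0}. A j (n - 1 - j))"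
  proof (rule sum.mono_neutral_right)
    show "{j. A j (n - 1 - j) \<noteq> 0} \<subseteq> h ` {..R}"
    proof
      fix j assume "j \<in> {j. A j (n - 1 - j) \<noteq> 0}"
      then have j1: "j < int L" and j2: "n - 1 - j < M0" using AN A0 by (meson mem_Collect_eq not_le)+
      show "j \<in> h ` {..R}"
      proof
        show "j = h (nat (int L - 1 - j))" using j1 by (simp add: h_def)
        show "nat (int L - 1 - j) \<in> {..R}" using j1 j2 by (simp add: R_def q_def)
      qed
    qed
  qed auto
  finally have s2: "LS A L (-1) q R = (\<Sum>j\<in>{j. A j (n - 1 - j) \<noteq> 0}. A j (n - 1 - j))" .
  have fin: "finite {j. A j (n - 1 - j) \<noteq> 0}"
  proof (rule finite_subset)
    show "{j. A j (n - 1 - j) \<noteq> 0} \<subseteq> {n - M0 .. int L}"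
    proof
      fix j assume "j \<in> {j. A j (n - 1 - j) \<noteq> 0}"
      then have j1: "j < int L" and j2: "n - 1 - j < M0" using AN A0 by (meson mem_Collect_eq not_le)+
      then show "j \<in> {n - M0 .. int L}" by simp
    qed
  qed simp
  show ?thesis using s1 s2 fin unfolding A_def B_def by simp
qed



lemma sum_app: "(sum g S) x = (\<Sum>i\<in>S. g i x)"
  by (induction S rule: infinite_finite_induct) (auto simp: plus_fun_def zero_fun_def)

lemma vs_tscale: "vector_space (tscale :: complex \<Rightarrow> ('u::ab_group_add, 'v::ab_group_add) tens \<Rightarrow> _)"
  by unfold_locales (simp_all add: tscale_def fun_eq_iff algebra_simps plus_fun_def)

lemma tens_lin1:
  assumes "vector_space scU" "vector_space scV"
  shows "Vector_Spaces.linear scU tscale (\<lambda>u. tens scU scV u v)"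
  unfolding Vector_Spaces.linear_iff
  using assms vs_tscale
  by (auto simp: tens_def tscale_def fun_eq_iff plus_fun_def lin_add lin_scale algebra_simps)

lemma tens_lin2:
  assumes "vector_space scU" "vector_space scV"
  shows "Vector_Spaces.linear scV tscale (\<lambda>v. tens scU scV u v)"
  unfolding Vector_Spaces.linear_iff
  using assms vs_tscale
  by (auto simp: tens_def tscale_def fun_eq_iff plus_fun_def lin_add lin_scale algebra_simps)

lemma bil_expand:
  fixes sU :: "complex \<Rightarrow> 'u::ab_group_add \<Rightarrow> 'u" and sV :: "complex \<Rightarrow> 'v::ab_group_add \<Rightarrow> 'v"
    and sW :: "complex \<Rightarrow> 'w::ab_group_add \<Rightarrow> 'w"
  assumes vU: "vector_space sU" and vV: "vector_space sV" and vW: "vector_space sW"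
    and BU: "\<not> module.dependent sU BU" "module.span sU BU = UNIV"
    and BV: "\<not> module.dependent sV BV" "module.span sV BV = UNIV"
    and l1: "\<And>v. Vector_Spaces.linear sU sW (\<lambda>u. P u v)"
    and l2: "\<And>u. Vector_Spaces.linear sV sW (P u)"
  shows "P u v = (\<Sum>\<alpha>\<in>{\<alpha>. module.representation sU BU u \<alpha> \<noteq> 0}. \<Sum>\<beta>\<in>{\<beta>. module.representation sV BV v \<beta> \<noteq> 0}.
            sW (module.representation sU BU u \<alpha> * module.representation sV BV v \<beta>) (P \<alpha> \<beta>))"
proof -
  interpret U: vector_space sU by fact
  interpret V: vector_space sV by fact
  interpret W: vector_space sW by fact
  define ru where "ru = U.representation BU u"
  define rv where "rv = V.representation BV v"
  define Su where "Su = {\<alpha>. ru \<alpha> \<noteq> 0}"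
  define Sv where "Sv = {\<beta>. rv \<beta> \<noteq> 0}"
  have u: "(\<Sum>\<alpha>\<in>Su. sU (ru \<alpha>) \<alpha>) = u"
    using U.sum_nonzero_representation_eq[of BU u] BU unfolding Su_def ru_def by simp
  have v: "(\<Sum>\<beta>\<in>Sv. sV (rv \<beta>) \<beta>) = v"
    using V.sum_nonzero_representation_eq[of BV v] BV unfolding Sv_def rv_def by simp
  have "P u v = P (\<Sum>\<alpha>\<in>Su. sU (ru \<alpha>) \<alpha>) v" by (simp only: u)
  also have "\<dots> = (\<Sum>\<alpha>\<in>Su. sW (ru \<alpha>) (P \<alpha> v))"
    by (simp add: lin_sum[OF l1] lin_scale[OF l1])
  also have "\<dots> = (\<Sum>\<alpha>\<in>Su. sW (ru \<alpha>) (P \<alpha> (\<Sum>\<beta>\<in>Sv. sV (rv \<beta>) \<beta>)))"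
    by (simp only: v)
  also have "\<dots> = (\<Sum>\<alpha>\<in>Su. \<Sum>\<beta>\<in>Sv. sW (ru \<alpha> * rv \<beta>) (P \<alpha> \<beta>))"
    by (simp add: lin_sum[OF l2] lin_scale[OF l2] W.scale_sum_right)
  finally show ?thesis unfolding Su_def Sv_def ru_def rv_def .
qed


lemma tensor_universal:
  fixes scU :: "complex \<Rightarrow> 'u::ab_group_add \<Rightarrow> 'u" and scV :: "complex \<Rightarrow> 'v::ab_group_add \<Rightarrow> 'v"
    and scK :: "complex \<Rightarrow> 'k::ab_group_add \<Rightarrow> 'k" and Bil :: "'u \<Rightarrow> 'v \<Rightarrow> 'k"
  assumes vU: "vector_space scU" and vV: "vector_space scV" and vK: "vector_space scK"
    and l1: "\<And>v. Vector_Spaces.linear scU scK (\<lambda>u. Bil u v)"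
    and l2: "\<And>u. Vector_Spaces.linear scV scK (Bil u)"
  shows "\<exists>f. Vector_Spaces.linear tscale scK f \<and> (\<forall>u v. f (tens scU scV u v) = Bil u v)"
proof -
  interpret U: vector_space scU by fact
  interpret V: vector_space scV by fact
  interpret K: vector_space scK by fact
  interpret T: vector_space "tscale :: complex \<Rightarrow> ('u, 'v) tens \<Rightarrow> _" by (rule vs_tscale)
  interpret P: vector_space_pair "tscale :: complex \<Rightarrow> ('u, 'v) tens \<Rightarrow> _" scK by unfold_locales
  define BU where "BU = U.extend_basis {}"
  define BV where "BV = V.extend_basis {}"
  have BU: "U.independent BU" "U.span BU = UNIV"
    unfolding BU_def by (simp_all add: U.independent_extend_basis U.independent_empty)
  have BV: "V.independent BV" "V.span BV = UNIV"
    unfolding BV_def by (simp_all add: V.independent_extend_basis V.independent_empty)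
  define cU where "cU \<alpha> = (\<lambda>x. U.representation BU x \<alpha>)" for \<alpha>
  define cV where "cV \<beta> = (\<lambda>x. V.representation BV x \<beta>)" for \<beta>
  have lcU: "Vector_Spaces.linear scU (*) (cU \<alpha>)" for \<alpha>
    unfolding cU_def by (rule U.linear_representation[OF BU])
  have lcV: "Vector_Spaces.linear scV (*) (cV \<beta>)" for \<beta>
    unfolding cV_def by (rule V.linear_representation[OF BV])
  have ev: "tens scU scV \<alpha> \<beta> (cU \<alpha>0) (cV \<beta>0) = (if \<alpha> = \<alpha>0 \<and> \<beta> = \<beta>0 then 1 else 0)"
    if "\<alpha> \<in> BU" "\<beta> \<in> BV" for \<alpha> \<beta> \<alpha>0 \<beta>0
    using that lcU lcV U.representation_basis[OF BU(1)] V.representation_basis[OF BV(1)]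
    by (simp add: tens_def cU_def cV_def)
  define tp where "tp = (\<lambda>(\<alpha>, \<beta>). tens scU scV \<alpha> \<beta>)"
  define Bt where "Bt = tp ` (BU \<times> BV)"
  have inj: "inj_on tp (BU \<times> BV)"
  proof (rule inj_onI, clarify)
    fix \<alpha> \<beta> \<alpha>' \<beta>' assume a: "\<alpha> \<in> BU" "\<beta> \<in> BV" "\<alpha>' \<in> BU" "\<beta>' \<in> BV"
      and eq: "tp (\<alpha>, \<beta>) = tp (\<alpha>', \<beta>')"
    have "tens scU scV \<alpha> \<beta> (cU \<alpha>) (cV \<beta>) = tens scU scV \<alpha>' \<beta>' (cU \<alpha>) (cV \<beta>)"
      using eq by (simp add: tp_def)
    then show "\<alpha> = \<alpha>' \<and> \<beta> = \<beta>'" using ev a by (auto split: if_splits)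
  qed
  have indep: "T.independent Bt"
  proof
    assume "T.dependent Bt"
    then obtain t c where t: "finite t" "t \<subseteq> Bt" and s0: "(\<Sum>F\<in>t. tscale (c F) F) = 0"
      and F0ex: "\<exists>F0\<in>t. c F0 \<noteq> 0"
      unfolding T.dependent_explicit by blast
    then obtain F0 where F0: "F0 \<in> t" and cF0: "c F0 \<noteq> 0" by blast
    have memB: "\<exists>\<alpha> \<beta>. \<alpha> \<in> BU \<and> \<beta> \<in> BV \<and> F = tens scU scV \<alpha> \<beta>" if "F \<in> t" for F
    proof -
      have "F \<in> Bt" using that t(2) by blast
      then obtain p where p: "p \<in> BU \<times> BV" "F = tp p" unfolding Bt_def by blast
      obtain \<alpha> \<beta> where "p = (\<alpha>, \<beta>)" by (cases p)
      with p show ?thesis unfolding tp_def by auto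
    qed
    obtain \<alpha>0 \<beta>0 where ab0: "\<alpha>0 \<in> BU" "\<beta>0 \<in> BV" "F0 = tens scU scV \<alpha>0 \<beta>0"
      using memB[OF F0] by blast
    have val: "F (cU \<alpha>0) (cV \<beta>0) = (if F = F0 then 1 else 0)" if Ft: "F \<in> t" for F
    proof -
      obtain \<alpha> \<beta> where ab: "\<alpha> \<in> BU" "\<beta> \<in> BV" "F = tens scU scV \<alpha> \<beta>"
        using memB[OF Ft] by blast
      have iff: "F = F0 \<longleftrightarrow> \<alpha> = \<alpha>0 \<and> \<beta> = \<beta>0"
      proof
        assume "F = F0"
        then have "tp (\<alpha>, \<beta>) = tp (\<alpha>0, \<beta>0)" using ab(3) ab0(3) unfolding tp_def by simp
        then have "(\<alpha>, \<beta>) = (\<alpha>0, \<beta>0)" by (rule inj_onD[OF inj]) (use ab ab0 in simp_all)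
        then show "\<alpha> = \<alpha>0 \<and> \<beta> = \<beta>0" by simp
      next
        assume "\<alpha> = \<alpha>0 \<and> \<beta> = \<beta>0"
        then show "F = F0" using ab(3) ab0(3) by simp
      qed
      have "F (cU \<alpha>0) (cV \<beta>0) = (if \<alpha> = \<alpha>0 \<and> \<beta> = \<beta>0 then 1 else 0)"
        unfolding ab(3) by (rule ev[OF ab(1,2)])
      then show ?thesis by (simp only: iff)
    qed
    have "(\<Sum>F\<in>t. tscale (c F) F) (cU \<alpha>0) (cV \<beta>0) = (\<Sum>F\<in>t. c F * F (cU \<alpha>0) (cV \<beta>0))"
      unfolding sum_app tscale_def by (rule refl)
    also have "\<dots> = (\<Sum>F\<in>t. if F = F0 then c F else 0)"
    proof (rule sum.cong)
      fix F assume "F \<in> t"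
      then show "c F * F (cU \<alpha>0) (cV \<beta>0) = (if F = F0 then c F else 0)" by (simp add: val)
    qed (rule refl)
    also have "\<dots> = c F0" using t(1) F0 by (simp only: sum.delta if_True)
    finally have "c F0 = (\<Sum>F\<in>t. tscale (c F) F) (cU \<alpha>0) (cV \<beta>0)" by (rule sym)
    also have "\<dots> = 0" unfolding s0 zero_fun_def by (rule refl)
    finally have "c F0 = 0" .
    with cF0 show False by simp
  qed
  define gB where "gB F = (case the_inv_into (BU \<times> BV) tp F of (\<alpha>, \<beta>) \<Rightarrow> Bil \<alpha> \<beta>)" for F
  define f where "f = P.construct Bt gB"
  have lf: "Vector_Spaces.linear tscale scK f"
    unfolding f_def by (rule P.linear_construct[OF indep])
  have fb: "f (tens scU scV \<alpha> \<beta>) = Bil \<alpha> \<beta>" if "\<alpha> \<in> BU" "\<beta> \<in> BV" for \<alpha> \<beta>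
  proof -
    have "tens scU scV \<alpha> \<beta> = tp (\<alpha>, \<beta>)" by (simp add: tp_def)
    moreover have "tp (\<alpha>, \<beta>) \<in> Bt" using that by (simp add: Bt_def)
    moreover have "the_inv_into (BU \<times> BV) tp (tp (\<alpha>, \<beta>)) = (\<alpha>, \<beta>)"
      using that inj by (simp add: the_inv_into_f_f)
    ultimately show ?thesis unfolding f_def
      by (simp add: P.construct_basis[OF indep] gB_def)
  qed
  have "f (tens scU scV u v) = Bil u v" for u v
  proof -
    let ?ru = "U.representation BU u" and ?rv = "V.representation BV v"
    have ex1: "tens scU scV u v = (\<Sum>\<alpha>\<in>{\<alpha>. ?ru \<alpha> \<noteq> 0}. \<Sum>\<beta>\<in>{\<beta>. ?rv \<beta> \<noteq> 0}.
            tscale (?ru \<alpha> * ?rv \<beta>) (tens scU scV \<alpha> \<beta>))"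
      by (rule bil_expand[OF vU vV vs_tscale BU BV tens_lin1[OF vU vV] tens_lin2[OF vU vV]])
    have "f (tens scU scV u v) = (\<Sum>\<alpha>\<in>{\<alpha>. ?ru \<alpha> \<noteq> 0}. \<Sum>\<beta>\<in>{\<beta>. ?rv \<beta> \<noteq> 0}.
            scK (?ru \<alpha> * ?rv \<beta>) (f (tens scU scV \<alpha> \<beta>)))"
      by (simp only: ex1 lin_sum[OF lf] lin_scale[OF lf])
    also have "\<dots> = (\<Sum>\<alpha>\<in>{\<alpha>. ?ru \<alpha> \<noteq> 0}. \<Sum>\<beta>\<in>{\<beta>. ?rv \<beta> \<noteq> 0}. scK (?ru \<alpha> * ?rv \<beta>) (Bil \<alpha> \<beta>))"
    proof (intro sum.cong refl)
      fix \<alpha> \<beta> assume "\<alpha> \<in> {\<alpha>. ?ru \<alpha> \<noteq> 0}" "\<beta> \<in> {\<beta>. ?rv \<beta> \<noteq> 0}"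
      then have "\<alpha> \<in> BU" "\<beta> \<in> BV" using U.representation_ne_zero V.representation_ne_zero by auto
      then show "scK (?ru \<alpha> * ?rv \<beta>) (f (tens scU scV \<alpha> \<beta>)) = scK (?ru \<alpha> * ?rv \<beta>) (Bil \<alpha> \<beta>)"
        by (simp only: fb)
    qed
    also have "\<dots> = Bil u v"
      by (rule bil_expand[OF vU vV vK BU BV l1 l2, symmetric])
    finally show ?thesis .
  qed
  with lf show ?thesis by blast
qed



theorem proposition2p15:
  fixes G :: "('g, 'm) monoid_scheme"
    and scU :: "complex \<Rightarrow> 'u::ab_group_add \<Rightarrow> 'u" and oneU :: 'u and YU :: "'u \<Rightarrow> int \<Rightarrow> 'u \<Rightarrow> 'u"
    and \<sigma> :: "'g \<Rightarrow> 'u \<Rightarrow> 'u"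
    and scV :: "complex \<Rightarrow> 'v::ab_group_add \<Rightarrow> 'v" and oneV :: 'v and YV :: "'v \<Rightarrow> int \<Rightarrow> 'v \<Rightarrow> 'v"
    and Vg :: "'g \<Rightarrow> 'v set"
    and Ys :: "('u, 'v) tens \<Rightarrow> int \<Rightarrow> ('u, 'v) tens \<Rightarrow> ('u, 'v) tens"
    and scK :: "complex \<Rightarrow> 'k::ab_group_add \<Rightarrow> 'k" and oneK :: 'k and YK :: "'k \<Rightarrow> int \<Rightarrow> 'k \<Rightarrow> 'k"
    and \<psi> :: "'u \<Rightarrow> 'k" and \<phi> :: "'v \<Rightarrow> 'k"
  assumes "group G"
    and "nva scU oneU YU"
    and "nva_group_action G scU oneU YU \<sigma>"
    and "nva_graded G scV oneV YV Vg"
    and "smash_Y G scU YU \<sigma> scV YV Vg Ys"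
    and "nva scK oneK YK"
    and "nva_hom scU oneU YU UNIV scK oneK YK \<psi>"
    and "nva_hom scV oneV YV UNIV scK oneK YK \<phi>"
    and "\<forall>g\<in>carrier G. \<forall>u. \<forall>v\<in>Vg g. \<forall>m n w.
           YK (\<phi> v) m (YK (\<psi> u) n w) = YK (\<psi> (\<sigma> g u)) n (YK (\<phi> v) m w)"
  shows "\<exists>f. nva_hom tscale (tens scU scV oneU oneV) Ys (tensor_space scU scV) scK oneK YK f
           \<and> (\<forall>u. f (tens scU scV u oneV) = \<psi> u) \<and> (\<forall>v. f (tens scU scV oneU v) = \<phi> v)
           \<and> (\<forall>f'. nva_hom tscale (tens scU scV oneU oneV) Ys (tensor_space scU scV) scK oneK YK f'
                   \<and> (\<forall>u. f' (tens scU scV u oneV) = \<psi> u) \<and> (\<forall>v. f' (tens scU scV oneU v) = \<phi> v)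
                   \<longrightarrow> (\<forall>a\<in>tensor_space scU scV. f' a = f a))"
proof -
  note grp = assms(1) and nvU = assms(2) and act = assms(3) and grd = assms(4) and smY = assms(5)
    and nvK = assms(6) and hpsi = assms(7) and hphi = assms(8) and comm = assms(9)
  have nvV: "nva scV oneV YV" using grd by (simp add: nva_graded_def)
  note bU = nva_basics[OF nvU] and bV = nva_basics[OF nvV] and bK = nva_basics[OF nvK]
  have vU: "vector_space scU" and vV: "vector_space scV" and vK: "vector_space scK"
    using bU(1) bV(1) bK(1) .
  interpret K: vector_space scK by fact
  interpret Tm: vector_space "tscale :: complex \<Rightarrow> ('u, 'v) tens \<Rightarrow> _" by (rule vs_tscale)
  have psi_add: "\<psi> (x + y) = \<psi> x + \<psi> y" and psi_sc: "\<psi> (scU c x) = scK c (\<psi> x)"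
    and psi_vac: "\<psi> oneU = oneK" and psi_Y: "\<psi> (YU x n y) = YK (\<psi> x) n (\<psi> y)" for x y c n
    using hpsi by (simp_all add: nva_hom_def)
  have phi_add: "\<phi> (x + y) = \<phi> x + \<phi> y" and phi_sc: "\<phi> (scV c x) = scK c (\<phi> x)"
    and phi_vac: "\<phi> oneV = oneK" and phi_Y: "\<phi> (YV x n y) = YK (\<phi> x) n (\<phi> y)" for x y c n
    using hphi by (simp_all add: nva_hom_def)
  have lpsi: "Vector_Spaces.linear scU scK \<psi>"
    using vU vK psi_add psi_sc by (simp add: Vector_Spaces.linear_iff)
  have lphi: "Vector_Spaces.linear scV scK \<phi>"
    using vV vK phi_add phi_sc by (simp add: Vector_Spaces.linear_iff)
  have psi0: "\<psi> 0 = 0" using lin_zero[OF lpsi] .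
  have phi0: "\<phi> 0 = 0" using lin_zero[OF lphi] .
  have sig_Y: "\<sigma> g (YU x n y) = YU (\<sigma> g x) n (\<sigma> g y)" if "g \<in> carrier G" for g x n y
    using act that by (simp add: nva_group_action_def nva_hom_def)
  have sig_one: "\<sigma> \<one>\<^bsub>G\<^esub> = id" using act by (simp add: nva_group_action_def)
  have sig_inv: "\<sigma> g (\<sigma> (inv\<^bsub>G\<^esub> g) x) = x" if "g \<in> carrier G" for g x
  proof -
    have "\<sigma> (g \<otimes>\<^bsub>G\<^esub> inv\<^bsub>G\<^esub> g) = \<sigma> g \<circ> \<sigma> (inv\<^bsub>G\<^esub> g)"
      using act that group.inv_closed[OF grp that] by (simp add: nva_group_action_def)
    moreover have "g \<otimes>\<^bsub>G\<^esub> inv\<^bsub>G\<^esub> g = \<one>\<^bsub>G\<^esub>" using group.r_inv[OF grp that] .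
    ultimately show ?thesis using sig_one by (metis comp_apply id_apply)
  qed
  have inv_car: "inv\<^bsub>G\<^esub> g \<in> carrier G" if "g \<in> carrier G" for g
    using group.inv_closed[OF grp that] .
  have decomp: "\<exists>vs. finite {g. vs g \<noteq> 0} \<and> (\<forall>g. vs g \<noteq> 0 \<longrightarrow> g \<in> carrier G \<and> vs g \<in> Vg g)
        \<and> y = (\<Sum>g\<in>{g. vs g \<noteq> 0}. vs g)" for y
  proof -
    from grd obtain vs where "finite {g. vs g \<noteq> 0}"
        "\<forall>g. (g \<in> carrier G \<longrightarrow> vs g \<in> Vg g) \<and> (g \<notin> carrier G \<longrightarrow> vs g = 0)"
        "y = (\<Sum>g\<in>{g. vs g \<noteq> 0}. vs g)"
      unfolding nva_graded_def by metis
    then show ?thesis by (metis (mono_tags))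
  qed
  have oneV_g: "oneV \<in> Vg \<one>\<^bsub>G\<^esub>" using grd by (simp add: nva_graded_def)
  have one_car: "\<one>\<^bsub>G\<^esub> \<in> carrier G" using grp by (simp add: group.is_monoid monoid.one_closed)
  define Bil where "Bil x y = YK (\<psi> x) (-1) (\<phi> y)" for x y
  have lB1: "Vector_Spaces.linear scU scK (\<lambda>x. Bil x y)" for y
    using vU vK by (simp add: Vector_Spaces.linear_iff Bil_def psi_add psi_sc bK)
  have lB2: "Vector_Spaces.linear scV scK (Bil x)" for x
    using vV vK by (simp add: Vector_Spaces.linear_iff Bil_def phi_add phi_sc bK)
  have B0l: "Bil 0 y = 0" and B0r: "Bil x 0 = 0" for x y
    by (simp_all add: Bil_def psi0 phi0 bK)
  obtain f where lf: "Vector_Spaces.linear tscale scK f"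
    and fT: "\<And>u v. f (tens scU scV u v) = Bil u v"
    using tensor_universal[OF vU vV vK lB1 lB2] by blast
  have L1: "Bil x y = YK (\<phi> y) (-1) (\<psi> (\<sigma> (inv\<^bsub>G\<^esub> k) x))" if k: "k \<in> carrier G" and y: "y \<in> Vg k" for k x y
  proof -
    have "YK (\<phi> y) (-1) (YK (\<psi> (\<sigma> (inv\<^bsub>G\<^esub> k) x)) (-1) oneK)
        = YK (\<psi> (\<sigma> k (\<sigma> (inv\<^bsub>G\<^esub> k) x))) (-1) (YK (\<phi> y) (-1) oneK)"
      using comm k y by blast
    then show ?thesis by (simp add: bK sig_inv[OF k] Bil_def)
  qed
  have L1h: "YK (\<psi> u) i (Bil x y) = Bil (YU u i x) y" if k: "k \<in> carrier G" and y: "y \<in> Vg k" for k u i x y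
  proof -
    define s where "s = \<sigma> (inv\<^bsub>G\<^esub> k)"
    have "YK (\<psi> u) i (Bil x y) = YK (\<psi> (\<sigma> k (s u))) i (YK (\<phi> y) (-1) (\<psi> (s x)))"
      using L1[OF k y] sig_inv[OF k] unfolding s_def by simp
    also have "\<dots> = YK (\<phi> y) (-1) (YK (\<psi> (s u)) i (\<psi> (s x)))"
      using comm k y by metis
    also have "\<dots> = YK (\<phi> y) (-1) (\<psi> (s (YU u i x)))"
      unfolding s_def by (simp add: psi_Y sig_Y[OF inv_car[OF k]])
    also have "\<dots> = Bil (YU u i x) y" using L1[OF k y] unfolding s_def by simp
    finally show ?thesis .
  qed
  have L1a: "YK (\<psi> u) i (Bil x y) = Bil (YU u i x) y" for u i x y
  proof -
    obtain vs where vs: "finite {g. vs g \<noteq> 0}" "\<forall>g. vs g \<noteq> 0 \<longrightarrow> g \<in> carrier G \<and> vs g \<in> Vg g"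
      "y = (\<Sum>g\<in>{g. vs g \<noteq> 0}. vs g)" using decomp by blast
    have "YK (\<psi> u) i (Bil x y) = (\<Sum>g\<in>{g. vs g \<noteq> 0}. YK (\<psi> u) i (Bil x (vs g)))"
      by (simp add: vs(3) lin_sum[OF lB2] lin_sum[OF bK(3)])
    also have "\<dots> = (\<Sum>g\<in>{g. vs g \<noteq> 0}. Bil (YU u i x) (vs g))"
      by (rule sum.cong) (use vs(2) L1h in auto)
    also have "\<dots> = Bil (YU u i x) y" by (simp add: vs(3) lin_sum[OF lB2])
    finally show ?thesis .
  qed
  have L2: "YK (\<phi> v) j (Bil x y) = Bil (\<sigma> g x) (YV v j y)" if g: "g \<in> carrier G" and v: "v \<in> Vg g" for g v j x y
  proof -
    have "YK (\<phi> v) j (YK (\<psi> x) (-1) (\<phi> y)) = YK (\<psi> (\<sigma> g x)) (-1) (YK (\<phi> v) j (\<phi> y))"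
      using comm g v by blast
    then show ?thesis by (simp add: Bil_def phi_Y)
  qed
  have PROD: "YK (Bil u v) n (Bil u' v') = (\<Sum>i\<in>{i. YU u i (\<sigma> g u') \<noteq> 0 \<and> YV v (n - 1 - i) v' \<noteq> 0}.
                Bil (YU u i (\<sigma> g u')) (YV v (n - 1 - i) v'))"
    if g: "g \<in> carrier G" and v: "v \<in> Vg g" for g u v u' v' n
  proof -
    define S where "S = {i. YU u i (\<sigma> g u') \<noteq> 0 \<and> YV v (n - 1 - i) v' \<noteq> 0}"
    define h where "h i = Bil (YU u i (\<sigma> g u')) (YV v (n - 1 - i) v')" for i
    have A: "YK (\<psi> u) m (YK (\<phi> v) k (Bil u' v')) = Bil (YU u m (\<sigma> g u')) (YV v k v')" for m k
      by (simp add: L2[OF g v] L1a)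
    obtain N where N: "\<And>m. m \<ge> N \<Longrightarrow> YU u m (\<sigma> g u') = 0" using bU(12) by blast
    obtain M where M: "\<And>k. k \<ge> M \<Longrightarrow> YV v k v' = 0" using bV(12) by blast
    have tr: "YK (\<psi> u) m (YK (\<phi> v) k (Bil u' v')) = 0" if "m \<ge> N" for m k
      using that by (simp add: A N B0l)
    have it: "YK (YK (\<psi> u) (-1) (\<phi> v)) n (Bil u' v') =
        (\<Sum>i\<in>{i. YK (\<psi> u) i (YK (\<phi> v) (n-1-i) (Bil u' v')) \<noteq> 0}. YK (\<psi> u) i (YK (\<phi> v) (n-1-i) (Bil u' v')))"
      using iterate_m1[OF nvK tr] by blast
    have finS: "finite S"
    proof (rule finite_subset)
      show "S \<subseteq> {n - M .. N}"
      proof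
        fix i assume "i \<in> S"
        then have h1: "YU u i (\<sigma> g u') \<noteq> 0" and h2: "YV v (n - 1 - i) v' \<noteq> 0" by (simp_all add: S_def)
        have "i < N" using h1 N by (metis not_le)
        moreover have "n - 1 - i < M" using h2 M by (metis not_le)
        ultimately show "i \<in> {n - M .. N}" by simp
      qed
    qed simp
    have "YK (Bil u v) n (Bil u' v') = (\<Sum>i\<in>{i. h i \<noteq> 0}. h i)"
      using it unfolding Bil_def[of u v] by (simp add: A h_def)
    also have "\<dots> = (\<Sum>i\<in>S. h i)"
    proof (rule sum.mono_neutral_left[OF finS])
      show "{i. h i \<noteq> 0} \<subseteq> S" unfolding S_def h_def by (auto simp: B0l B0r)
    qed auto
    finally show ?thesis unfolding S_def h_def .
  qed
  define T where "T = tensor_space scU scV"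
  have T_span: "T = Tm.span (range (\<lambda>(u, v). tens scU scV u v))"
    by (simp add: T_def tensor_space_def)
  have tT: "tens scU scV u v \<in> T" for u v
    unfolding T_span by (rule Tm.span_base) auto
  have T0: "0 \<in> T" unfolding T_span by (rule Tm.span_zero)
  have Tadd: "a \<in> T \<Longrightarrow> b \<in> T \<Longrightarrow> a + b \<in> T" for a b unfolding T_span by (rule Tm.span_add)
  have Tsc: "a \<in> T \<Longrightarrow> tscale c a \<in> T" for a c unfolding T_span by (rule Tm.span_scale)
  have sY_add: "Ys (a + b) n c = Ys a n c + Ys b n c" "Ys c n (a + b) = Ys c n a + Ys c n b"
    if "a \<in> T" "b \<in> T" "c \<in> T" for a b c n
    using smY that unfolding smash_Y_def Let_def T_def by blast+
  have sY_sc: "Ys (tscale z a) n b = tscale z (Ys a n b)" "Ys b n (tscale z a) = tscale z (Ys b n a)"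
    if "a \<in> T" "b \<in> T" for a b z n
    using smY that unfolding smash_Y_def Let_def T_def by blast+
  have sY_t: "Ys (tens scU scV u v) n (tens scU scV u' v') =
      (\<Sum>i\<in>{i. YU u i (\<sigma> g u') \<noteq> 0 \<and> YV v (n - 1 - i) v' \<noteq> 0}.
          tens scU scV (YU u i (\<sigma> g u')) (YV v (n - 1 - i) v'))"
    if "g \<in> carrier G" "v \<in> Vg g" for g u v u' v' n
    using smY that unfolding smash_Y_def Let_def by blast
  have sY0: "Ys 0 n c = 0" "Ys c n 0 = 0" if "c \<in> T" for c n
    using sY_add[OF T0 T0 that, of n] by simp_all
  have f0: "f 0 = 0" using lin_zero[OF lf] .
  have C1: "f (Ys (tens scU scV u v) n (tens scU scV u' v')) = YK (f (tens scU scV u v)) n (f (tens scU scV u' v'))"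
    if g: "g \<in> carrier G" and v: "v \<in> Vg g" for g u v u' v' n
    by (simp add: sY_t[OF g v] lin_sum[OF lf] fT PROD[OF g v])
  have C2: "\<forall>n. f (Ys X n (tens scU scV u' v')) = YK (f X) n (f (tens scU scV u' v'))" if X: "X \<in> T" for X u' v'
  proof -
    define Y0 where "Y0 = tens scU scV u' v'"
    have Y0T: "Y0 \<in> T" unfolding Y0_def by (rule tT)
    define Q where "Q X \<longleftrightarrow> X \<in> T \<and> (\<forall>n. f (Ys X n Y0) = YK (f X) n (f Y0))" for X
    have sub: "Tm.subspace (Collect Q)"
      unfolding Tm.subspace_def Q_def
      by (auto simp: T0 Tadd Tsc sY0[OF Y0T] f0 bK sY_add[OF _ _ Y0T] sY_sc[OF _ Y0T]
          lin_add[OF lf] lin_scale[OF lf])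
    have base: "Q (tens scU scV u v)" for u v
    proof -
      obtain vs where vs: "finite {g. vs g \<noteq> 0}" "\<forall>g. vs g \<noteq> 0 \<longrightarrow> g \<in> carrier G \<and> vs g \<in> Vg g"
        "v = (\<Sum>g\<in>{g. vs g \<noteq> 0}. vs g)" using decomp by blast
      have "tens scU scV u v = (\<Sum>g\<in>{g. vs g \<noteq> 0}. tens scU scV u (vs g))"
        by (subst vs(3)) (rule lin_sum[OF tens_lin2[OF vU vV]])
      moreover have "(\<Sum>g\<in>{g. vs g \<noteq> 0}. tens scU scV u (vs g)) \<in> Collect Q"
      proof (rule Tm.subspace_sum[OF sub])
        fix g assume "g \<in> {g. vs g \<noteq> 0}"
        then have "g \<in> carrier G" "vs g \<in> Vg g" using vs(2) by auto
        then show "tens scU scV u (vs g) \<in> Collect Q"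
          unfolding Q_def Y0_def using C1 tT by auto
      qed
      ultimately show ?thesis by simp
    qed
    have "X \<in> Tm.span (range (\<lambda>(u, v). tens scU scV u v))" using X T_span by simp
    then have "Q X"
      by (rule Tm.span_induct[OF _ sub]) (auto simp: base)
    then show ?thesis unfolding Q_def Y0_def by blast
  qed
  have C3: "f (Ys X n Y) = YK (f X) n (f Y)" if X: "X \<in> T" and Y: "Y \<in> T" for X Y n
  proof -
    define Q where "Q Y \<longleftrightarrow> Y \<in> T \<and> (\<forall>n. f (Ys X n Y) = YK (f X) n (f Y))" for Y
    have sub: "Tm.subspace (Collect Q)"
      unfolding Tm.subspace_def Q_def
      by (auto simp: T0 Tadd Tsc sY0[OF X] f0 bK sY_add[OF _ _ X] sY_sc[OF _ X]
          lin_add[OF lf] lin_scale[OF lf])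
    have "Y \<in> Tm.span (range (\<lambda>(u, v). tens scU scV u v))" using Y T_span by simp
    then have "Q Y"
      by (rule Tm.span_induct[OF _ sub]) (use C2[OF X] tT in \<open>auto simp: Q_def\<close>)
    then show ?thesis unfolding Q_def by blast
  qed
  have fU: "f (tens scU scV u oneV) = \<psi> u" for u by (simp add: fT Bil_def phi_vac bK)
  have fV: "f (tens scU scV oneU v) = \<phi> v" for v by (simp add: fT Bil_def psi_vac bK)
  have hom: "nva_hom tscale (tens scU scV oneU oneV) Ys (tensor_space scU scV) scK oneK YK f"
    unfolding nva_hom_def T_def[symmetric]
    by (simp add: lin_add[OF lf] lin_scale[OF lf] fU psi_vac C3)
  have tens0: "tens scU scV 0 v = 0" "tens scU scV u 0 = 0" for u v
    using lin_zero[OF tens_lin1[OF vU vV]] lin_zero[OF tens_lin2[OF vU vV]] by auto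
  have prodt: "Ys (tens scU scV u oneV) (-1) (tens scU scV oneU v) = tens scU scV u v" for u v
  proof -
    have "Ys (tens scU scV u oneV) (-1) (tens scU scV oneU v) =
      (\<Sum>i\<in>{i. YU u i oneU \<noteq> 0 \<and> YV oneV (- 1 - 1 - i) v \<noteq> 0}.
          tens scU scV (YU u i oneU) (YV oneV (- 1 - 1 - i) v))"
      using sY_t[OF one_car oneV_g, of u "-1" oneU v] sig_one by simp
    also have "\<dots> = tens scU scV u v"
    proof (cases "u = 0 \<or> v = 0")
      case True
      then have E: "{i. YU u i oneU \<noteq> 0 \<and> YV oneV (- 1 - 1 - i) v \<noteq> 0} = {}" by (auto simp: bU bV)
      have "tens scU scV u v = 0" using True tens0 by auto
      then show ?thesis by (simp only: E sum.empty)
    next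
      case False
      then have "{i. YU u i oneU \<noteq> 0 \<and> YV oneV (- 1 - 1 - i) v \<noteq> 0} = {-1}" by (auto simp: bU bV)
      then show ?thesis by (simp add: bU bV)
    qed
    finally show ?thesis .
  qed
  have uniq: "\<forall>a\<in>tensor_space scU scV. f' a = f a"
    if h': "nva_hom tscale (tens scU scV oneU oneV) Ys (tensor_space scU scV) scK oneK YK f'"
      and fU': "\<forall>u. f' (tens scU scV u oneV) = \<psi> u" and fV': "\<forall>v. f' (tens scU scV oneU v) = \<phi> v" for f'
  proof
    have f'add: "f' (a + b) = f' a + f' b" if "a \<in> T" "b \<in> T" for a b
      using h' that by (simp add: nva_hom_def T_def)
    have f'sc: "f' (tscale c a) = scK c (f' a)" if "a \<in> T" for a c
      using h' that by (simp add: nva_hom_def T_def)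
    have f'Y: "f' (Ys a n b) = YK (f' a) n (f' b)" if "a \<in> T" "b \<in> T" for a b n
      using h' that by (simp add: nva_hom_def T_def)
    have f'0: "f' 0 = 0"
    proof -
      have "tscale 0 (0 :: ('u,'v) tens) = 0" by (simp add: tscale_def zero_fun_def)
      then show ?thesis using f'sc[OF T0, of 0] by simp
    qed
    have f't: "f' (tens scU scV u v) = f (tens scU scV u v)" for u v
      using f'Y[OF tT tT, of u oneV "-1" oneU v] prodt fU' fV' by (simp add: fT Bil_def)
    define Q where "Q a \<longleftrightarrow> a \<in> T \<and> f' a = f a" for a
    have sub: "Tm.subspace (Collect Q)"
      unfolding Tm.subspace_def Q_def
      by (auto simp: T0 Tadd Tsc f'0 f0 f'add f'sc lin_add[OF lf] lin_scale[OF lf])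
    fix a assume "a \<in> tensor_space scU scV"
    then have "a \<in> Tm.span (range (\<lambda>(u, v). tens scU scV u v))" by (simp add: tensor_space_def)
    then have "Q a"
      by (rule Tm.span_induct[OF _ sub]) (use f't tT in \<open>auto simp: Q_def\<close>)
    then show "f' a = f a" unfolding Q_def by blast
  qed
  show ?thesis using hom fU fV uniq by blast
qed

end
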